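(* Let $b$ be a positive integer and let $f(x)=\sum_{k=2}^{\infty}x^k\sum_{j=1}^{\infty}\frac{1}{(j+b)^k}=\sum_{k=2}^\infty x^k(\zeta(k)-H_k(b))$, convergent for $|x|<b+1$. Then for $x$ in this disc with $x\ne b$, $2x\notin\mathbb{Z}$, $$f(x)=\frac{x^2}{2b(x-b)}-\frac{\pi x}{2}\cot(\pi x)-\pi x\int_0^1\left(\frac{\sin(2\pi(x-b)u)}{\sin(2\pi x)}-u\cos(2\pi b u)\right)\cot(\pi u)\,du,$$ and the right-hand side gives an analytic continuation of $f$ to such $x\in\mathbb{C}$.
   Context: $\zeta$ is the Riemann zeta function and $H_k(n)=\sum_{m=1}^n m^{-k}$ is the generalized harmonic number. *)

theory Defs
  imports "HOL-Analysis.Analysis"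
begin

(* Riemann zeta at integer arguments k >= 2 (only used for k >= 2) *)
definition zeta_nat :: "nat \<Rightarrow> real" where
  "zeta_nat k = (\<Sum>n. 1 / (real (Suc n)) ^ k)"

definition harm_gen :: "nat \<Rightarrow> nat \<Rightarrow> real" where
  "harm_gen k n = (\<Sum>m=1..n. 1 / (real m) ^ k)"

definition f_series :: "nat \<Rightarrow> complex \<Rightarrow> complex" where
  "f_series b x = (\<Sum>k. x ^ (k + 2) * complex_of_real (zeta_nat (k + 2) - harm_gen (k + 2) b))"

definition rhs_formula :: "nat \<Rightarrow> complex \<Rightarrow> complex" where
  "rhs_formula b x =
     x\<^sup>2 / (2 * of_nat b * (x - of_nat b))
     - of_real pi * x / 2 * cot (of_real pi * x)
     - of_real pi * x * integral {0..1} (\<lambda>u::real.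
          (sin (2 * of_real pi * (x - of_nat b) * of_real u) / sin (2 * of_real pi * x)
           - of_real u * of_real (cos (2 * pi * real b * u))) * of_real (cot (pi * u)))"

end

theory Submission
  imports Defs
begin

lemma sin_geom_sums:
  fixes r t :: real
  assumes "0 \<le> r" "r < 1"
  shows "(\<lambda>k. r^(Suc k) * sin (real (Suc k) * t)) sums (r * sin t / (1 - 2*r * cos t + r^2))"
proof -
  define z where "z = complex_of_real r * cis t"
  have nz: "norm z < 1" using assms by (simp add: z_def norm_mult)
  have "(\<lambda>k. z^k) sums (1/(1-z))" using geometric_sums[OF nz] by simp
  hence "(\<lambda>k. z * z^k) sums (z * (1/(1-z)))" by (rule sums_mult)
  hence s: "(\<lambda>k. z^(Suc k)) sums (z/(1-z))" by simp
  have "(\<lambda>k. Im (z^(Suc k))) sums Im (z/(1-z))" using sums_Im[OF s] .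
  moreover have "Im (z^(Suc k)) = r^(Suc k) * sin (real (Suc k) * t)" for k
  proof -
    have "z^(Suc k) = complex_of_real (r^Suc k) * cis (real (Suc k) * t)"
      unfolding z_def power_mult_distrib of_real_power by (subst Complex.DeMoivre[symmetric]) (rule refl)
    thus ?thesis by simp
  qed
  moreover have "Im (z/(1-z)) = r * sin t / (1 - 2*r * cos t + r^2)"
  proof -
    have "Im (z/(1-z)) = (r * sin t * (1 - r * cos t) + r * cos t*(r * sin t)) / ((1 - r * cos t)^2 + (r * sin t)^2)"
      by (simp add: z_def Im_divide power2_eq_square)
    also have "(1 - r * cos t)^2 + (r * sin t)^2 = 1 - 2*r * cos t + r^2"
      by (simp add: power2_eq_square algebra_simps sin_squared_eq[unfolded power2_eq_square])
    finally show ?thesis by (simp add: algebra_simps)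
  qed
  ultimately show ?thesis by simp
qed


definition Pk :: "real \<Rightarrow> real \<Rightarrow> real" where
  "Pk r u = 2 * r * sin (2 * pi * u) / (1 - 2 * r * cos (2 * pi * u) + r^2)"

lemma Pk_den: "1 - 2 * r * cos (2 * pi * u) + r^2 = (1-r)^2 + 4 * r * (sin (pi * u))^2"
proof -
  have c: "cos (2 * pi * u) = 1 - 2 * (sin (pi * u))^2"
    using cos_double_sin[of "pi * u"] by (simp add: mult.assoc)
  show ?thesis unfolding c by (simp add: power2_eq_square algebra_simps)
qed

lemma Pk_num: "sin (2 * pi * u) = 2 * sin (pi * u) * cos (pi * u)"
  using sin_double[of "pi * u"] by (simp add: mult.assoc)

lemma Pk_bound:
  assumes "0 \<le> r"
  shows "\<bar>Pk r u\<bar> \<le> \<bar>cot (pi * u)\<bar>"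
proof (cases "sin (pi * u) = 0 \<or> r = 0")
  case True
  thus ?thesis by (auto simp: Pk_def Pk_num)
next
  case False
  hence s: "sin (pi * u) \<noteq> 0" and r: "r > 0" using assms by auto
  have d: "(1-r)^2 + 4 * r * (sin (pi * u))^2 \<ge> 4 * r * (sin (pi * u))^2" by simp
  have dp: "4 * r * (sin (pi * u))^2 > 0" using s r by simp
  have dp2: "(1-r)^2 + 4 * r * (sin (pi * u))^2 > 0" using d dp by linarith
  have "\<bar>Pk r u\<bar> = 4 * r * \<bar>sin (pi * u) * cos (pi * u)\<bar> / ((1-r)^2 + 4 * r * (sin (pi * u))^2)"
    using r dp2 by (simp add: Pk_def Pk_den Pk_num abs_mult abs_divide)
  also have "\<dots> \<le> 4 * r * \<bar>sin (pi * u) * cos (pi * u)\<bar> / (4 * r * (sin (pi * u))^2)"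
    by (rule divide_left_mono[OF d]) (use r dp dp2 in \<open>auto intro!: mult_pos_pos\<close>)
  also have "\<dots> = \<bar>cot (pi * u)\<bar>"
    using r s by (simp add: cot_def abs_mult power2_eq_square field_simps)
  finally show ?thesis .
qed

lemma Pk_lim:
  assumes "sin (pi * u) \<noteq> 0" and "(r \<longlongrightarrow> 1) F"
  shows "((\<lambda>n. Pk (r n) u) \<longlongrightarrow> cot (pi * u)) F"
proof -
  have e: "1 - 2 * 1 * cos (2 * pi * u) + 1^2 = 4 * (sin (pi * u))^2"
    using Pk_den[of 1 u] by simp
  have den: "1 - 2 * 1 * cos (2 * pi * u) + 1^2 \<noteq> 0"
    using assms(1) unfolding e by simp
  have "((\<lambda>n. Pk (r n) u) \<longlongrightarrow> 2 * 1 * sin (2 * pi * u) / (1 - 2 * 1 * cos (2 * pi * u) + 1^2)) F"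
    unfolding Pk_def by (intro tendsto_intros assms(2) den)
  also have "2 * 1 * sin (2 * pi * u) / (1 - 2 * 1 * cos (2 * pi * u) + 1^2) = cot (pi * u)"
    using assms(1) unfolding e by (simp add: Pk_num cot_def power2_eq_square)
  finally show ?thesis .
qed

lemma Pk_0: "Pk r 0 = 0" and Pk_1: "Pk r 1 = 0"
  by (simp_all add: Pk_def)


lemma t_cos_le_sin:
  assumes "0 \<le> t" "t \<le> pi"
  shows "t * cos t \<le> sin t"
proof -
  have "sin 0 - 0 * cos 0 \<le> sin t - t * cos t"
  proof (rule DERIV_nonneg_imp_nondecreasing[of 0 t "\<lambda>t. sin t - t * cos t"])
    fix y assume y0: "0 \<le> y" and y1: "y \<le> t"
    note y = y0 y1
    show "\<exists>d. ((\<lambda>t. sin t - t * cos t) has_real_derivative d) (at y) \<and> 0 \<le> d"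
    proof (intro exI conjI)
      show "((\<lambda>t. sin t - t * cos t) has_real_derivative y * sin y) (at y)"
        by (auto intro!: derivative_eq_intros)
      show "0 \<le> y * sin y" using y assms by (intro mult_nonneg_nonneg sin_ge_zero) auto
    qed
  qed (use assms in auto)
  thus ?thesis by simp
qed

lemma cot_bound_half:
  assumes "0 < u" "u \<le> 1/2"
  shows "\<bar>cot (pi * u)\<bar> * u \<le> 1 / pi"
proof -
  have s: "sin (pi * u) > 0" using assms by (intro sin_gt_zero) auto
  have "0 \<le> pi * u" "pi * u \<le> pi / 2" using assms by auto
  hence c: "cos (pi * u) \<ge> 0" by (intro cos_ge_zero) (use pi_gt_zero in linarith)+
  have "(pi * u) * cos (pi * u) \<le> sin (pi * u)" using assms by (intro t_cos_le_sin) auto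
  hence "cos (pi * u) * u / sin (pi * u) \<le> 1 / pi"
    using s pi_gt_zero by (simp add: field_simps)
  thus ?thesis using s c by (simp add: cot_def abs_mult abs_divide)
qed

lemma cot_bound:
  assumes "0 < u" "u < 1"
  shows "\<bar>cot (pi * u)\<bar> * min u (1 - u) \<le> 1 / pi"
proof (cases "u \<le> 1/2")
  case True thus ?thesis using cot_bound_half[of u] assms by (simp add: min_def)
next
  case False
  have "cot (pi * u) = - cot (pi * (1 - u))"
  proof -
    have "pi * u = pi - pi * (1 - u)" by (simp add: algebra_simps)
    hence "cot (pi * u) = cot (pi - pi * (1 - u))" by simp
    also have "\<dots> = - cot (pi * (1 - u))"
      by (simp add: cot_def sin_diff cos_diff)
    finally show ?thesis .
  qed
  thus ?thesis using cot_bound_half[of "1 - u"] assms False by (simp add: min_def)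
qed


lemma sin_2pi_int: "sin (2 * complex_of_real pi * of_int n) = 0"
  and cos_2pi_int: "cos (2 * complex_of_real pi * of_int n) = 1"
proof -
  have e: "2 * complex_of_real pi * of_int n = of_real (2 * pi * real_of_int n)" by simp
  show "sin (2 * complex_of_real pi * of_int n) = 0" unfolding e sin_of_real
    by (simp add: sin_integer_2pi)
  show "cos (2 * complex_of_real pi * of_int n) = 1" unfolding e cos_of_real
    by (simp add: cos_integer_2pi)
qed

lemma sin_2pi_nat: "sin (2 * complex_of_real pi * of_nat n) = 0"
  and cos_2pi_nat: "cos (2 * complex_of_real pi * of_nat n) = 1"
  using sin_2pi_int[of "int n"] cos_2pi_int[of "int n"] by simp_all

lemma sin_shift_2pi_int: "sin (w + 2 * complex_of_real pi * of_int n) = sin w"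
  by (simp add: sin_add sin_2pi_int cos_2pi_int)

definition gz :: "complex \<Rightarrow> nat \<Rightarrow> complex \<Rightarrow> complex" where
  "gz x b z = sin (2 * of_real pi * (x - of_nat b) * z) / sin (2 * of_real pi * x)
              - z * cos (2 * of_real pi * of_nat b * z)"

lemma gz_0: "gz x b 0 = 0" by (simp add: gz_def)

lemma gz_1:
  assumes "sin (2 * of_real pi * x) \<noteq> 0"
  shows "gz x b 1 = 0"
proof -
  have "sin (2 * of_real pi * (x - of_nat b) * 1) = sin (2 * of_real pi * x + 2 * complex_of_real pi * of_int (- int b))"
    by (simp add: algebra_simps)
  also have "\<dots> = sin (2 * of_real pi * x)" by (rule sin_shift_2pi_int)
  finally show ?thesis using assms by (simp add: gz_def cos_2pi_nat)
qed

lemma gz_holo: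
  assumes "sin (2 * of_real pi * x) \<noteq> 0"
  shows "gz x b holomorphic_on UNIV"
  unfolding gz_def[abs_def] using assms by (intro holomorphic_intros) auto


lemma gz_bound:
  assumes s: "sin (2 * of_real pi * x) \<noteq> 0"
  shows "\<exists>L. \<forall>u\<in>{0..1::real}. norm (gz x b (of_real u) * of_real (cot (pi * u))) \<le> L"
proof -
  let ?S = "closed_segment (0::complex) 1"
  define g' where "g' z = 2 * of_real pi * (x - of_nat b) * cos (2 * of_real pi * (x - of_nat b) * z) / sin (2 * of_real pi * x)
     - (cos (2 * of_real pi * of_nat b * z) - z * (2 * of_real pi * of_nat b) * sin (2 * of_real pi * of_nat b * z))" for z
  have "continuous_on ?S g'" unfolding g'_def by (intro continuous_intros) (use s in auto)
  hence "compact (g' ` ?S)"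
    by (intro compact_continuous_image) auto
  then obtain L0 where L0: "L0 > 0" "\<forall>z\<in>?S. norm (g' z) \<le> L0"
    by (auto dest!: compact_imp_bounded simp: bounded_pos)
  have der: "(gz x b has_field_derivative g' z) (at z within ?S)" for z
    unfolding gz_def[abs_def] g'_def using s
    by (auto intro!: derivative_eq_intros simp: field_simps)
  have mvt: "norm (gz x b w - gz x b v) \<le> L0 * norm (w - v)" if "w \<in> ?S" "v \<in> ?S" for w v
    by (rule field_differentiable_bound[OF convex_closed_segment der]) (use L0 that in auto)
  have inS: "complex_of_real u \<in> ?S" if "0 \<le> u" "u \<le> 1" for u
    using that by (auto simp: closed_segment_def scaleR_conv_of_real intro!: exI[of _ u])
  show ?thesis
  proof (intro exI ballI)
    fix u :: real assume u: "u \<in> {0..1}"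
    show "norm (gz x b (of_real u) * of_real (cot (pi * u))) \<le> L0 / pi"
    proof (cases "u = 0 \<or> u = 1")
      case True thus ?thesis using L0 by auto
    next
      case False
      hence u': "0 < u" "u < 1" using u by auto
      have a1: "norm (gz x b (of_real u)) \<le> L0 * u"
        using mvt[OF inS[of u] inS[of 0]] u' gz_0[of x b] by simp
      have a2: "norm (gz x b (of_real u)) \<le> L0 * (1 - u)"
      proof -
        have "norm (gz x b (of_real u)) \<le> L0 * norm (complex_of_real u - 1)"
          using mvt[OF inS[of u] inS[of 1]] u' gz_1[OF s, of b] by simp
        also have "norm (complex_of_real u - 1) = 1 - u"
          using u' by (metis abs_of_pos diff_gt_0_iff_gt norm_minus_commute norm_of_real of_real_1 of_real_diff)
        finally show ?thesis .
      qed
      have a: "norm (gz x b (of_real u)) \<le> L0 * min u (1 - u)"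
        using a1 a2 by (simp add: min_def)
      have "norm (gz x b (of_real u) * of_real (cot (pi * u))) = norm (gz x b (of_real u)) * \<bar>cot (pi * u)\<bar>"
        by (simp add: norm_mult)
      also have "\<dots> \<le> L0 * min u (1 - u) * \<bar>cot (pi * u)\<bar>"
        by (rule mult_right_mono[OF a]) simp
      also have "\<dots> = L0 * (\<bar>cot (pi * u)\<bar> * min u (1 - u))" by simp
      also have "\<dots> \<le> L0 * (1 / pi)"
        by (rule mult_left_mono[OF cot_bound[OF u']]) (use L0 in auto)
      finally show ?thesis by simp
    qed
  qed
qed


lemma ftc_complex:
  assumes "\<And>z. (F has_field_derivative f z) (at z)"
  shows "((\<lambda>u. f (complex_of_real u)) has_integral (F 1 - F 0)) {0..1}"
proof -
  have "((\<lambda>u. f (complex_of_real u)) has_integral (F (of_real 1) - F (of_real 0))) {0..1}"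
    by (rule fundamental_theorem_of_calculus[of 0 1 "\<lambda>u. F (of_real u)"])
       (auto intro!: has_vector_derivative_real_field assms)
  thus ?thesis by simp
qed

lemma two_sin_sin: "2 * sin A * sin B = cos (A - B) - cos (A + B)" for A B :: complex
  by (simp add: cos_diff cos_add)

lemma two_cos_sin: "2 * cos C * sin B = sin (B + C) + sin (B - C)" for B C :: complex
  by (simp add: sin_diff sin_add)

lemma int_sin_sin:
  fixes \<alpha> \<beta> :: complex
  assumes "\<alpha> - \<beta> \<noteq> 0" "\<alpha> + \<beta> \<noteq> 0"
  shows "((\<lambda>u. 2 * sin (\<alpha> * of_real u) * sin (\<beta> * of_real u)) has_integral
           (sin (\<alpha> - \<beta>) / (\<alpha> - \<beta>) - sin (\<alpha> + \<beta>) / (\<alpha> + \<beta>))) {0..1}"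
proof -
  define F where "F z = sin ((\<alpha> - \<beta>) * z) / (\<alpha> - \<beta>) - sin ((\<alpha> + \<beta>) * z) / (\<alpha> + \<beta>)" for z
  have "(F has_field_derivative 2 * sin (\<alpha> * z) * sin (\<beta> * z)) (at z)" for z
  proof -
    have "(F has_field_derivative cos ((\<alpha> - \<beta>) * z) - cos ((\<alpha> + \<beta>) * z)) (at z)"
      unfolding F_def[abs_def] using assms by (auto intro!: derivative_eq_intros)
    also have "cos ((\<alpha> - \<beta>) * z) - cos ((\<alpha> + \<beta>) * z) = 2 * sin (\<alpha> * z) * sin (\<beta> * z)"
      by (simp add: two_sin_sin ring_distribs)
    finally show ?thesis .
  qed
  from ftc_complex[OF this] show ?thesis by (simp add: F_def)
qed

lemma int_u_sin:
  fixes c :: complex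
  assumes "c \<noteq> 0"
  shows "((\<lambda>u. of_real u * sin (c * of_real u)) has_integral (sin c / c^2 - cos c / c)) {0..1}"
proof -
  define F where "F z = sin (c * z) / c^2 - z * cos (c * z) / c" for z
  have "(F has_field_derivative z * sin (c * z)) (at z)" for z
    unfolding F_def[abs_def] using assms
    by (auto intro!: derivative_eq_intros simp: field_simps power2_eq_square)
  from ftc_complex[OF this] show ?thesis by (simp add: F_def)
qed


definition cc :: "complex \<Rightarrow> nat \<Rightarrow> nat \<Rightarrow> complex" where
  "cc x b j = 1 / (2 * of_real pi * (x - of_nat b) - 2 * of_real pi * of_nat j)
     - 1 / (2 * of_real pi * (x - of_nat b) + 2 * of_real pi * of_nat j)
     + 1 / (2 * of_real pi * of_nat j + 2 * of_real pi * of_nat b)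
     + (if j = b then 0 else 1 / (2 * of_real pi * of_nat j - 2 * of_real pi * of_nat b))"

lemma coef_integral:
  assumes s: "sin (2 * of_real pi * x) \<noteq> 0" and j: "j \<ge> 1"
    and xj: "x - of_nat b - of_nat j \<noteq> 0" "x - of_nat b + of_nat j \<noteq> 0"
  shows "((\<lambda>u. gz x b (of_real u) * of_real (2 * sin (2 * pi * real j * u))) has_integral cc x b j) {0..1}"
proof -
  define \<alpha> where "\<alpha> = 2 * of_real pi * (x - of_nat b)"
  define \<beta> where "\<beta> = 2 * complex_of_real pi * of_nat j"
  define \<gamma> where "\<gamma> = 2 * complex_of_real pi * of_nat b"
  define s where "s = sin (2 * complex_of_real pi * x)"
  have pi0: "complex_of_real pi \<noteq> 0" by simp
  have ab1: "\<alpha> - \<beta> = 2 * of_real pi * (x - of_nat b - of_nat j)"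
    by (simp add: \<alpha>_def \<beta>_def algebra_simps)
  have ab2: "\<alpha> + \<beta> = 2 * of_real pi * (x - of_nat b + of_nat j)"
    by (simp add: \<alpha>_def \<beta>_def algebra_simps)
  have nz1: "\<alpha> - \<beta> \<noteq> 0" "\<alpha> + \<beta> \<noteq> 0" unfolding ab1 ab2 using xj pi0 by auto
  have "sin (\<alpha> - \<beta>) = sin (2 * of_real pi * x + 2 * complex_of_real pi * of_int (- int b - int j))"
    by (simp add: \<alpha>_def \<beta>_def algebra_simps)
  hence sab1: "sin (\<alpha> - \<beta>) = s" by (simp only: sin_shift_2pi_int s_def)
  have "sin (\<alpha> + \<beta>) = sin (2 * of_real pi * x + 2 * complex_of_real pi * of_int (int j - int b))"
    by (simp add: \<alpha>_def \<beta>_def algebra_simps)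
  hence sab2: "sin (\<alpha> + \<beta>) = s" by (simp only: sin_shift_2pi_int s_def)
  have i1: "((\<lambda>u. 2 * sin (\<alpha> * of_real u) * sin (\<beta> * of_real u) / s) has_integral
              (1 / (\<alpha> - \<beta>) - 1 / (\<alpha> + \<beta>))) {0..1}"
  proof -
    have "s \<noteq> 0" using s by (simp add: s_def)
    hence v: "(sin (\<alpha> - \<beta>) / (\<alpha> - \<beta>) - sin (\<alpha> + \<beta>) / (\<alpha> + \<beta>)) / s = 1 / (\<alpha> - \<beta>) - 1 / (\<alpha> + \<beta>)"
      unfolding sab1 sab2 by (simp add: diff_divide_distrib)
    show ?thesis using has_integral_divide[OF int_sin_sin[OF nz1], of s] unfolding v .
  qed
  have bg1: "\<beta> + \<gamma> = 2 * complex_of_real pi * of_nat (j + b)" by (simp add: \<beta>_def \<gamma>_def algebra_simps)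
  have "complex_of_nat (j + b) \<noteq> 0" using j by (simp only: of_nat_eq_0_iff)
  hence bgnz: "\<beta> + \<gamma> \<noteq> 0" unfolding bg1 by simp
  have i2: "((\<lambda>u. of_real u * sin ((\<beta> + \<gamma>) * of_real u)) has_integral (- 1 / (\<beta> + \<gamma>))) {0..1}"
  proof -
    have sc: "sin (\<beta> + \<gamma>) = 0" "cos (\<beta> + \<gamma>) = 1" unfolding bg1 by (rule sin_2pi_nat cos_2pi_nat)+
    show ?thesis using int_u_sin[OF bgnz] unfolding sc by simp
  qed
  have i3: "((\<lambda>u. of_real u * sin ((\<beta> - \<gamma>) * of_real u)) has_integral
              (if j = b then 0 else - 1 / (\<beta> - \<gamma>))) {0..1}"
  proof (cases "j = b")
    case True thus ?thesis by (simp add: \<beta>_def \<gamma>_def)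
  next
    case False
    have bg2: "\<beta> - \<gamma> = 2 * complex_of_real pi * of_int (int j - int b)"
      by (simp add: \<beta>_def \<gamma>_def algebra_simps)
    have "\<beta> - \<gamma> \<noteq> 0" unfolding bg2 using False by simp
    moreover have sc: "sin (\<beta> - \<gamma>) = 0" "cos (\<beta> - \<gamma>) = 1" unfolding bg2 by (rule sin_2pi_int cos_2pi_int)+
    ultimately show ?thesis using int_u_sin[of "\<beta> - \<gamma>"] False unfolding sc by simp
  qed
  have tot: "((\<lambda>u. 2 * sin (\<alpha> * of_real u) * sin (\<beta> * of_real u) / s
              - of_real u * sin ((\<beta> + \<gamma>) * of_real u) - of_real u * sin ((\<beta> - \<gamma>) * of_real u))
            has_integral cc x b j) {0..1}"
  proof -
    have "cc x b j = (1 / (\<alpha> - \<beta>) - 1 / (\<alpha> + \<beta>)) - (- 1 / (\<beta> + \<gamma>)) - (if j = b then 0 else - 1 / (\<beta> - \<gamma>))"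
      by (simp add: cc_def \<alpha>_def \<beta>_def \<gamma>_def)
    thus ?thesis using has_integral_diff[OF has_integral_diff[OF i1 i2] i3] by simp
  qed
  show ?thesis
  proof (rule has_integral_eq[OF _ tot])
    fix u :: real
    have e1: "complex_of_real (2 * sin (2 * pi * real j * u)) = 2 * sin (\<beta> * of_real u)"
      by (simp add: \<beta>_def sin_of_real[symmetric])
    have e2: "2 * cos (\<gamma> * of_real u) * sin (\<beta> * of_real u) =
              sin ((\<beta> + \<gamma>) * of_real u) + sin ((\<beta> - \<gamma>) * of_real u)"
      using two_cos_sin[of "\<gamma> * of_real u" "\<beta> * of_real u"] by (simp add: ring_distribs)
    show "2 * sin (\<alpha> * of_real u) * sin (\<beta> * of_real u) / s
              - of_real u * sin ((\<beta> + \<gamma>) * of_real u) - of_real u * sin ((\<beta> - \<gamma>) * of_real u)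
          = gz x b (of_real u) * of_real (2 * sin (2 * pi * real j * u))"
    proof -
      have e3: "of_real u * sin ((\<beta> + \<gamma>) * of_real u) + of_real u * sin ((\<beta> - \<gamma>) * of_real u)
               = of_real u * (2 * cos (\<gamma> * of_real u) * sin (\<beta> * of_real u))"
        by (simp only: e2 distrib_left)
      have "(sin (\<alpha> * of_real u) / s - of_real u * cos (\<gamma> * of_real u)) * (2 * sin (\<beta> * of_real u))
            = 2 * sin (\<alpha> * of_real u) * sin (\<beta> * of_real u) / s - of_real u * (2 * cos (\<gamma> * of_real u) * sin (\<beta> * of_real u))"
        by (simp add: algebra_simps)
      also have "\<dots> = 2 * sin (\<alpha> * of_real u) * sin (\<beta> * of_real u) / s
              - of_real u * sin ((\<beta> + \<gamma>) * of_real u) - of_real u * sin ((\<beta> - \<gamma>) * of_real u)"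
        unfolding e3[symmetric] by simp
      finally have "(sin (\<alpha> * of_real u) / s - of_real u * cos (\<gamma> * of_real u)) * (2 * sin (\<beta> * of_real u)) =
         2 * sin (\<alpha> * of_real u) * sin (\<beta> * of_real u) / s
              - of_real u * sin ((\<beta> + \<gamma>) * of_real u) - of_real u * sin ((\<beta> - \<gamma>) * of_real u)" .
      thus ?thesis unfolding e1 gz_def \<alpha>_def[symmetric] \<gamma>_def[symmetric] s_def[symmetric] by simp
    qed
  qed
qed


lemma gz_cont: "sin (2 * of_real pi * x) \<noteq> 0 \<Longrightarrow> continuous_on S (\<lambda>u. gz x b (of_real u))"
  unfolding gz_def by (intro continuous_intros) auto

lemma gz_bounded:
  assumes "sin (2 * of_real pi * x) \<noteq> 0"
  obtains M where "\<And>u. u \<in> {0..1} \<Longrightarrow> norm (gz x b (of_real u)) \<le> M"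
proof -
  have "compact ((\<lambda>u. gz x b (of_real u)) ` {0..1::real})"
    by (intro compact_continuous_image gz_cont assms) auto
  then obtain M where "\<forall>y\<in>(\<lambda>u. gz x b (of_real u)) ` {0..1::real}. norm y \<le> M"
    by (auto dest!: compact_imp_bounded simp: bounded_iff)
  thus ?thesis by (intro that[of M]) auto
qed

lemma notInts_shift:
  assumes "x \<notin> \<int>"
  shows "x - of_nat b - of_nat j \<noteq> 0" "x - of_nat b + of_nat j \<noteq> 0"
proof -
  show "x - of_nat b - of_nat j \<noteq> 0"
  proof
    assume "x - of_nat b - of_nat j = 0"
    hence "x = of_nat (b + j)" by (simp add: algebra_simps)
    thus False using assms by simp
  qed
  show "x - of_nat b + of_nat j \<noteq> 0"
  proof
    assume "x - of_nat b + of_nat j = 0"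
    hence "x = of_int (int b - int j)" by (simp add: algebra_simps)
    thus False using assms by (metis Ints_of_int)
  qed
qed

lemma poisson_integral:
  assumes s: "sin (2 * of_real pi * x) \<noteq> 0" and xZ: "x \<notin> \<int>" and r: "0 \<le> r" "r < 1"
    and sc: "summable (\<lambda>k. norm (cc x b (Suc k)))"
  shows "((\<lambda>u. gz x b (of_real u) * of_real (Pk r u)) has_integral
           (\<Sum>k. complex_of_real (r^(Suc k)) * cc x b (Suc k))) {0..1}"
proof -
  obtain Mg where Mg: "\<And>u. u \<in> {0..1} \<Longrightarrow> norm (gz x b (of_real u)) \<le> Mg"
    using gz_bounded[OF s] by blast
  define f where "f n u = gz x b (of_real u) * of_real (\<Sum>k<n. 2 * r^(Suc k) * sin (2 * pi * real (Suc k) * u))" for n u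
  have fi: "(f n has_integral (\<Sum>k<n. complex_of_real (r^(Suc k)) * cc x b (Suc k))) {0..1}" for n
  proof -
    have "((\<lambda>u. \<Sum>k<n. complex_of_real (r^(Suc k)) * (gz x b (of_real u) * of_real (2 * sin (2 * pi * real (Suc k) * u))))
            has_integral (\<Sum>k<n. complex_of_real (r^(Suc k)) * cc x b (Suc k))) {0..1}"
      by (intro has_integral_sum has_integral_mult_right coef_integral s notInts_shift xZ) auto
    thus ?thesis
      by (rule has_integral_eq[rotated]) (simp add: f_def sum_distrib_left algebra_simps)
  qed
  have fb: "norm (f n u) \<le> Mg * (2 / (1 - r))" if u: "u \<in> {0..1}" for n u
  proof -
    have "\<bar>\<Sum>k<n. 2 * r^(Suc k) * sin (2 * pi * real (Suc k) * u)\<bar> \<le> (\<Sum>k<n. \<bar>2 * r^(Suc k) * sin (2 * pi * real (Suc k) * u)\<bar>)"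
      by (rule sum_abs)
    also have "\<dots> \<le> (\<Sum>k<n. 2 * r^k)"
    proof (intro sum_mono)
      fix k
      have "\<bar>2 * r^(Suc k) * sin (2 * pi * real (Suc k) * u)\<bar> = 2 * r^(Suc k) * \<bar>sin (2 * pi * real (Suc k) * u)\<bar>"
        using r by (simp add: abs_mult)
      also have "\<dots> \<le> 2 * r^(Suc k) * 1" using r by (intro mult_left_mono) auto
      also have "\<dots> \<le> 2 * r^k" using r by (simp add: mult_left_le_one_le)
      finally show "\<bar>2 * r^(Suc k) * sin (2 * pi * real (Suc k) * u)\<bar> \<le> 2 * r^k" .
    qed
    also have "\<dots> = 2 * (\<Sum>k<n. r^k)" by (simp add: sum_distrib_left)
    also have "(\<Sum>k<n. r^k) \<le> (\<Sum>k. r^k)"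
      by (rule sum_le_suminf) (use r in \<open>auto intro: summable_geometric\<close>)
    also have "(\<Sum>k. r^k) = 1 / (1 - r)" using suminf_geometric[of r] r by simp
    finally have A: "\<bar>\<Sum>k<n. 2 * r^(Suc k) * sin (2 * pi * real (Suc k) * u)\<bar> \<le> 2 / (1 - r)" by simp
    have "norm (f n u) = norm (gz x b (of_real u)) * \<bar>\<Sum>k<n. 2 * r^(Suc k) * sin (2 * pi * real (Suc k) * u)\<bar>"
      by (simp only: f_def norm_mult norm_of_real)
    also have "\<dots> \<le> Mg * (2 / (1 - r))"
    proof -
      have Mg0: "0 \<le> Mg" using Mg[OF u] norm_ge_zero order.trans by blast
      show ?thesis by (rule mult_mono[OF Mg[OF u] A]) (use Mg0 in auto)
    qed
    finally show ?thesis .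
  qed
  have fl: "(\<lambda>n. f n u) \<longlonglongrightarrow> gz x b (of_real u) * of_real (Pk r u)" for u
  proof -
    have "(\<lambda>k. r^(Suc k) * sin (real (Suc k) * (2 * pi * u))) sums
            (r * sin (2 * pi * u) / (1 - 2 * r * cos (2 * pi * u) + r^2))"
      by (rule sin_geom_sums[OF r])
    from sums_mult[OF this, of 2]
    have "(\<lambda>k. 2 * r^(Suc k) * sin (2 * pi * real (Suc k) * u)) sums Pk r u"
      by (simp add: Pk_def algebra_simps)
    hence "(\<lambda>n. \<Sum>k<n. 2 * r^(Suc k) * sin (2 * pi * real (Suc k) * u)) \<longlonglongrightarrow> Pk r u"
      by (simp add: sums_def)
    thus ?thesis unfolding f_def by (intro tendsto_intros)
  qed
  have summ: "summable (\<lambda>k. complex_of_real (r^(Suc k)) * cc x b (Suc k))"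
  proof (rule summable_comparison_test[OF _ sc], intro exI allI impI)
    fix k
    have "norm (complex_of_real (r^(Suc k)) * cc x b (Suc k)) = r^(Suc k) * norm (cc x b (Suc k))"
      using r by (simp only: norm_mult norm_of_real) simp
    also have "\<dots> \<le> 1 * norm (cc x b (Suc k))"
      using r power_le_one[of r "Suc k"] by (intro mult_right_mono) auto
    finally show "norm (complex_of_real (r^(Suc k)) * cc x b (Suc k)) \<le> norm (cc x b (Suc k))" by simp
  qed
  show ?thesis
  proof (rule has_integral_dominated_convergence[OF fi, of "\<lambda>_. Mg * (2 / (1 - r))"])
    show "(\<lambda>_. Mg * (2 / (1 - r))) integrable_on {0..1::real}" by (rule integrable_const_ivl)
    show "\<forall>u\<in>{0..1}. norm (f k u) \<le> Mg * (2 / (1 - r))" for k using fb by auto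
    show "\<forall>u\<in>{0..1}. (\<lambda>k. f k u) \<longlonglongrightarrow> gz x b (of_real u) * of_real (Pk r u)" using fl by auto
    show "(\<lambda>n. \<Sum>k<n. complex_of_real (r^(Suc k)) * cc x b (Suc k)) \<longlonglongrightarrow> (\<Sum>k. complex_of_real (r^(Suc k)) * cc x b (Suc k))"
      using summ by (rule summable_LIMSEQ)
  qed
qed


lemma main_integral:
  assumes s: "sin (2 * of_real pi * x) \<noteq> 0" and xZ: "x \<notin> \<int>"
    and sc: "summable (\<lambda>k. norm (cc x b (Suc k)))"
  shows "((\<lambda>u. gz x b (of_real u) * of_real (cot (pi * u))) has_integral (\<Sum>k. cc x b (Suc k))) {0..1}"
proof -
  define r where "r n = 1 - inverse (real (Suc n))" for n
  have r01: "0 \<le> r n" "r n < 1" for n by (auto simp: r_def field_simps)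
  have rlim: "r \<longlonglongrightarrow> 1"
    unfolding r_def using tendsto_diff[OF tendsto_const LIMSEQ_inverse_real_of_nat, of 1] by simp
  obtain B where B: "\<And>u. u \<in> {0..1} \<Longrightarrow> norm (gz x b (of_real u) * of_real (cot (pi * u))) \<le> B"
    using gz_bound[OF s, of b] by blast
  show ?thesis
  proof (rule has_integral_dominated_convergence[OF poisson_integral[OF s xZ r01 sc], of "\<lambda>_. B"])
    show "(\<lambda>_. B) integrable_on {0..1::real}" by (rule integrable_const_ivl)
    show "\<forall>u\<in>{0..1}. norm (gz x b (of_real u) * of_real (Pk (r k) u)) \<le> B" for k
    proof
      fix u :: real assume u: "u \<in> {0..1}"
      have "norm (gz x b (of_real u) * of_real (Pk (r k) u)) = norm (gz x b (of_real u)) * \<bar>Pk (r k) u\<bar>"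
        by (simp only: norm_mult norm_of_real)
      also have "\<dots> \<le> norm (gz x b (of_real u)) * \<bar>cot (pi * u)\<bar>"
        by (intro mult_left_mono Pk_bound r01) auto
      also have "\<dots> = norm (gz x b (of_real u) * of_real (cot (pi * u)))"
        by (simp only: norm_mult norm_of_real)
      also have "\<dots> \<le> B" by (rule B[OF u])
      finally show "norm (gz x b (of_real u) * of_real (Pk (r k) u)) \<le> B" .
    qed
    show "\<forall>u\<in>{0..1}. (\<lambda>k. gz x b (of_real u) * of_real (Pk (r k) u)) \<longlonglongrightarrow> gz x b (of_real u) * of_real (cot (pi * u))"
    proof
      fix u :: real assume u: "u \<in> {0..1}"
      show "(\<lambda>k. gz x b (of_real u) * of_real (Pk (r k) u)) \<longlonglongrightarrow> gz x b (of_real u) * of_real (cot (pi * u))"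
      proof (cases "u = 0 \<or> u = 1")
        case True thus ?thesis by (auto simp: Pk_0 Pk_1)
      next
        case False
        hence "0 < u" "u < 1" using u by auto
        hence "sin (pi * u) \<noteq> 0" using sin_gt_zero[of "pi * u"] by auto
        from Pk_lim[OF this rlim] show ?thesis by (intro tendsto_intros)
      qed
    qed
    show "(\<lambda>n. \<Sum>k. complex_of_real (r n ^ Suc k) * cc x b (Suc k)) \<longlonglongrightarrow> (\<Sum>k. cc x b (Suc k))"
    proof -
      have "(\<lambda>n. \<Sum>k. complex_of_real (r n ^ Suc k) * cc x b (Suc k)) \<longlonglongrightarrow> (\<Sum>k. cc x b (Suc k))"
      proof (rule tannerys_theorem[THEN conjunct2, THEN conjunct2, of _ _ _ "\<lambda>k. norm (cc x b (Suc k))"])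
        show "((\<lambda>n. complex_of_real (r n ^ Suc k) * cc x b (Suc k)) \<longlongrightarrow> cc x b (Suc k)) sequentially" for k
          using rlim by (auto intro!: tendsto_eq_intros)
        show "\<forall>\<^sub>F (k, n) in at_top \<times>\<^sub>F sequentially.
                norm (complex_of_real (r n ^ Suc k) * cc x b (Suc k)) \<le> norm (cc x b (Suc k))"
        proof (rule always_eventually, clarify)
          fix k n
          have "norm (complex_of_real (r n ^ Suc k) * cc x b (Suc k)) = r n ^ Suc k * norm (cc x b (Suc k))"
            using r01[of n] by (simp only: norm_mult norm_of_real) simp
          also have "\<dots> \<le> 1 * norm (cc x b (Suc k))"
            using r01[of n] power_le_one[of "r n" "Suc k"] by (intro mult_right_mono) auto
          finally show "norm (complex_of_real (r n ^ Suc k) * cc x b (Suc k)) \<le> norm (cc x b (Suc k))" by simp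
        qed
      qed (use sc in auto)
      thus ?thesis .
    qed
  qed
qed


lemma summable_inv_sq: "summable (\<lambda>k. C * inverse (real (Suc k)) ^ 2)"
proof -
  have "summable (\<lambda>k. inverse (real k ^ 2))" by (rule inverse_power_summable) auto
  hence "summable (\<lambda>k. inverse (real (k + 1) ^ 2))" by (subst summable_iff_shift)
  thus ?thesis by (intro summable_mult) (simp add: power_inverse)
qed

lemma summable_norm_dig:
  fixes z :: complex
  shows "summable (\<lambda>k. norm (inverse (of_nat (Suc k)) - inverse (z + of_nat k)))"
proof (rule summable_comparison_test'[OF summable_inv_sq[of "2 * norm (z - 1)"]])
  fix k :: nat assume k: "k \<ge> nat \<lceil>2 * norm z\<rceil> + 1"
  hence kz: "real k \<ge> 2 * norm z + 1" by linarith
  have "norm (z + of_nat k) \<ge> real k - norm z"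
    using norm_triangle_ineq2[of "of_nat k" "-z"] by (simp add: add.commute)
  hence zk: "norm (z + of_nat k) \<ge> real (Suc k) / 2" using kz by simp
  have zk0: "z + of_nat k \<noteq> 0" using zk by auto
  have "inverse (of_nat (Suc k)) - inverse (z + of_nat k) = (z - 1) / (of_nat (Suc k) * (z + of_nat k))"
  proof -
    have k1: "(of_nat (Suc k) :: complex) \<noteq> 0" by (simp only: of_nat_eq_0_iff)
    show ?thesis using zk0 k1 by (simp add: inverse_diff_inverse divide_simps)
  qed
  hence "norm (inverse (of_nat (Suc k)) - inverse (z + of_nat k)) = norm (z - 1) / (real (Suc k) * norm (z + of_nat k))"
    by (simp only: norm_divide norm_mult norm_of_nat)
  also have "\<dots> \<le> norm (z - 1) / (real (Suc k) * (real (Suc k) / 2))"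
    using zk0 by (intro divide_left_mono mult_left_mono zk) (auto intro!: mult_pos_pos)
  also have "\<dots> = 2 * norm (z - 1) * inverse (real (Suc k)) ^ 2"
    by (simp add: field_simps power2_eq_square)
  finally show "norm (norm (inverse (of_nat (Suc k)) - inverse (z + of_nat k))) \<le> 2 * norm (z - 1) * inverse (real (Suc k)) ^ 2"
    by simp
qed


lemma dig_sums:
  fixes z :: complex
  assumes "z \<noteq> 0"
  shows "(\<lambda>k. inverse (of_nat (Suc k)) - inverse (z + of_nat k)) sums (Digamma z + euler_mascheroni)"
  using summable_sums[OF summable_Digamma[OF assms]] by (simp add: Digamma_def)

definition t4 :: "nat \<Rightarrow> nat \<Rightarrow> complex" where
  "t4 b k = (if Suc k = b then 0 else inverse (of_nat (Suc k) - of_nat b)) - inverse (of_nat (Suc k))"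

lemma t4_shift: "t4 b (k + b) = inverse (of_nat (Suc k)) - inverse (of_nat (Suc b) + of_nat k)"
  by (simp add: t4_def algebra_simps)

lemma t4_sum_initial:
  assumes "b \<ge> 1"
  shows "(\<Sum>k<b. t4 b k) = - harm (b - 1) - harm b"
proof -
  obtain m where m: "b = Suc m" using assms by (cases b) auto
  have "(\<Sum>k<b. t4 b k) = (\<Sum>k<b. (if Suc k = b then 0 else inverse (of_nat (Suc k) - of_nat b))) - (\<Sum>k<b. inverse (of_nat (Suc k)))"
    by (simp add: t4_def sum_subtractf)
  also have "(\<Sum>k<b. inverse (of_nat (Suc k) :: complex)) = harm b" by (simp add: harm_altdef)
  also have "(\<Sum>k<b. (if Suc k = b then 0 else inverse (of_nat (Suc k) - of_nat b :: complex)))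
           = (\<Sum>k<m. inverse (of_nat (Suc k) - of_nat b))" by (simp add: m)
  also have "\<dots> = (\<Sum>k<m. - inverse (of_nat (Suc (m - Suc k))))"
  proof (rule sum.cong[OF refl])
    fix k assume "k \<in> {..<m}"
    hence k: "k < m" by simp
    have eq: "(of_nat (Suc k) - of_nat b :: complex) = - of_nat (Suc (m - Suc k))"
      using k by (simp add: m of_nat_diff)
    show "inverse (of_nat (Suc k) - of_nat b :: complex) = - inverse (of_nat (Suc (m - Suc k)))"
      unfolding eq by (rule inverse_minus_eq)
  qed
  also have "\<dots> = (\<Sum>k<m. - inverse (of_nat (Suc k)))"
    by (rule sum.nat_diff_reindex[where g="\<lambda>k. - inverse (of_nat (Suc k) :: complex)"])
  also have "\<dots> = - harm (b - 1)" by (simp add: m harm_altdef sum_negf)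
  finally show ?thesis by simp
qed

lemma t4_sums:
  assumes "b \<ge> 1"
  shows "t4 b sums (- harm (b - 1))"
proof -
  have "(\<lambda>k. t4 b (k + b)) sums (Digamma (of_nat (Suc b)) + euler_mascheroni)"
    unfolding t4_shift by (rule dig_sums) (simp del: of_nat_Suc)
  hence "(\<lambda>k. t4 b (k + b)) sums harm b" by (simp only: Digamma_of_nat) simp
  hence "t4 b sums (harm b + (\<Sum>k<b. t4 b k))" by (simp only: sums_iff_shift)
  thus ?thesis using t4_sum_initial[OF assms] by simp
qed

lemma t4_summable_norm: "summable (\<lambda>k. norm (t4 b k))"
proof -
  have "summable (\<lambda>k. norm (t4 b (k + b)))"
    unfolding t4_shift by (rule summable_norm_dig)
  thus ?thesis by (subst (asm) summable_iff_shift[of "\<lambda>k. norm (t4 b k)"])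
qed


lemma frac_scale: "1 / (c * y - c * z) = inverse (y - z) / (c::complex)"
  and frac_scale': "1 / (c * y + c * z) = inverse (y + z) / (c::complex)"
  by (simp_all add: right_diff_distrib[symmetric] distrib_left[symmetric] divide_inverse inverse_mult_distrib mult.commute)

lemma cc_decomp:
  assumes xZ: "x \<notin> \<int>"
  shows "cc x b (Suc k) = ((inverse (of_nat (Suc k)) - inverse ((1 - (x - of_nat b)) + of_nat k))
      + (inverse (of_nat (Suc k)) - inverse ((1 + (x - of_nat b)) + of_nat k))
      - (inverse (of_nat (Suc k)) - inverse (of_nat (Suc b) + of_nat k))
      + t4 b k) / (2 * of_real pi)"
proof -
  define A where "A = x - of_nat b"
  define K where "K = (of_nat (Suc k) :: complex)"
  define B where "B = (of_nat b :: complex)"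
  have "cc x b (Suc k) = (inverse (A - K) - inverse (A + K) + inverse (K + B)
          + (if Suc k = b then 0 else inverse (K - B))) / (2 * of_real pi)"
    unfolding cc_def A_def[symmetric] K_def[symmetric] B_def[symmetric] frac_scale frac_scale'
    by (simp add: A_def B_def add_divide_distrib diff_divide_distrib)
  also have "inverse (A - K) = - inverse ((1 - A) + of_nat k)"
  proof -
    have e: "A - K = - ((1 - A) + of_nat k)" by (simp add: K_def algebra_simps)
    show ?thesis unfolding e by (rule inverse_minus_eq)
  qed
  also have "inverse (A + K) = inverse ((1 + A) + of_nat k)"
    by (simp add: K_def algebra_simps)
  also have "inverse (K + B) = inverse (of_nat (Suc b) + of_nat k)"
    by (simp add: K_def B_def algebra_simps)
  finally show ?thesis unfolding A_def[symmetric]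
    by (simp add: t4_def K_def B_def algebra_simps)
qed

lemma notInts_one:
  assumes "x \<notin> \<int>"
  shows "1 - (x - of_nat b) \<noteq> 0" "1 + (x - of_nat b) \<noteq> 0"
proof -
  show "1 - (x - of_nat b) \<noteq> 0"
  proof
    assume "1 - (x - of_nat b) = 0"
    hence "x = of_nat (Suc b)" by (simp add: algebra_simps)
    thus False using assms by simp
  qed
  show "1 + (x - of_nat b) \<noteq> 0"
  proof
    assume "1 + (x - of_nat b) = 0"
    hence "x = of_int (int b - 1)" by (simp add: algebra_simps)
    thus False using assms by (metis Ints_of_int)
  qed
qed

lemma cc_sums:
  assumes xZ: "x \<notin> \<int>" and b: "b \<ge> 1"
  shows "(\<lambda>k. cc x b (Suc k)) sums
          ((Digamma (1 - (x - of_nat b)) + Digamma (1 + (x - of_nat b)) + 2 * euler_mascheroni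
             - harm b - harm (b - 1)) / (2 * of_real pi))"
proof -
  note s1 = dig_sums[OF notInts_one(1)[OF xZ, of b]]
  note s2 = dig_sums[OF notInts_one(2)[OF xZ, of b]]
  have "(of_nat (Suc b) :: complex) \<noteq> 0" by (simp only: of_nat_eq_0_iff)
  note s3 = dig_sums[OF this]
  note s4 = t4_sums[OF b]
  have "(\<lambda>k. ((inverse (of_nat (Suc k)) - inverse ((1 - (x - of_nat b)) + of_nat k))
      + (inverse (of_nat (Suc k)) - inverse ((1 + (x - of_nat b)) + of_nat k))
      - (inverse (of_nat (Suc k)) - inverse (of_nat (Suc b) + of_nat k))
      + t4 b k) / (2 * of_real pi)) sums
      (((Digamma (1 - (x - of_nat b)) + euler_mascheroni) + (Digamma (1 + (x - of_nat b)) + euler_mascheroni)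
        - (Digamma (of_nat (Suc b)) + euler_mascheroni) + (- harm (b - 1))) / (2 * of_real pi))"
    by (intro sums_divide sums_add sums_diff s1 s2 s3 s4)
  also have "Digamma (of_nat (Suc b)) + euler_mascheroni = (harm b :: complex)"
    by (simp only: Digamma_of_nat) simp
  finally show ?thesis unfolding cc_decomp[OF xZ, symmetric]
    by (simp add: algebra_simps)
qed

lemma tri4: "norm (a + b - c + d) \<le> norm a + norm b + norm c + norm (d::'a::real_normed_vector)"
proof -
  have "norm (a + b - c + d) \<le> norm (a + b - c) + norm d" by (rule norm_triangle_ineq)
  moreover have "norm (a + b - c) \<le> norm (a + b) + norm c" by (rule norm_triangle_ineq4)
  moreover have "norm (a + b) \<le> norm a + norm b" by (rule norm_triangle_ineq)
  ultimately show ?thesis by linarith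
qed

lemma cc_summable_norm:
  assumes xZ: "x \<notin> \<int>"
  shows "summable (\<lambda>k. norm (cc x b (Suc k)))"
proof (rule summable_comparison_test[OF _ summable_divide[OF summable_add[OF summable_add[OF summable_add[OF
        summable_norm_dig[of "1 - (x - of_nat b)"] summable_norm_dig[of "1 + (x - of_nat b)"]]
        summable_norm_dig[of "of_nat (Suc b)"]] t4_summable_norm[of b]], of "2 * pi"]], intro exI allI impI)
  fix k
  let ?t1 = "inverse (of_nat (Suc k)) - inverse ((1 - (x - of_nat b)) + of_nat k) :: complex"
  let ?t2 = "inverse (of_nat (Suc k)) - inverse ((1 + (x - of_nat b)) + of_nat k) :: complex"
  let ?t3 = "inverse (of_nat (Suc k)) - inverse (of_nat (Suc b) + of_nat k) :: complex"
  have "norm (norm (cc x b (Suc k))) = norm (?t1 + ?t2 - ?t3 + t4 b k) / (2 * pi)"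
    unfolding cc_decomp[OF xZ] by (simp add: norm_divide)
  also have "\<dots> \<le> (norm ?t1 + norm ?t2 + norm ?t3 + norm (t4 b k)) / (2 * pi)"
    by (rule divide_right_mono[OF tri4]) simp
  finally show "norm (norm (cc x b (Suc k))) \<le> (norm ?t1 + norm ?t2 + norm ?t3 + norm (t4 b k)) / (2 * pi)" .
qed


lemma sin_pi_nz:
  fixes x :: complex
  assumes "x \<notin> \<int>"
  shows "sin (of_real pi * x) \<noteq> 0"
proof
  assume "sin (of_real pi * x) = 0"
  then obtain n :: int where "of_real pi * x = of_real (of_int n * pi)" by (auto simp: sin_eq_0)
  hence "x = of_int n" by (simp add: mult.commute)
  thus False using assms by (metis Ints_of_int)
qed

lemma Digamma_reflection:
  fixes x :: complex
  assumes xZ: "x \<notin> \<int>"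
  shows "Digamma (1 - x) - Digamma x = of_real pi * cot (of_real pi * x)"
proof -
  have x0: "x \<notin> \<int>\<^sub>\<le>\<^sub>0" using xZ nonpos_Ints_subset_Ints by blast
  have x1: "1 - x \<notin> \<int>\<^sub>\<le>\<^sub>0"
  proof
    assume "1 - x \<in> \<int>\<^sub>\<le>\<^sub>0"
    hence "1 - x \<in> \<int>" using nonpos_Ints_subset_Ints by blast
    hence "1 - (1 - x) \<in> \<int>" by (intro Ints_diff) auto
    thus False using xZ by simp
  qed
  have s: "sin (of_real pi * x) \<noteq> 0" by (rule sin_pi_nz[OF xZ])
  have G: "(\<lambda>z::complex. Gamma z * Gamma (1 - z)) = (\<lambda>z::complex. of_real pi / sin (of_real pi * z))"
    by (rule ext) (rule Gamma_reflection_complex)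
  have d1: "((\<lambda>z. Gamma z * Gamma (1 - z)) has_field_derivative
              Gamma x * Gamma (1 - x) * (Digamma x - Digamma (1 - x))) (at x)"
    using x0 x1 by (auto intro!: derivative_eq_intros simp: algebra_simps)
  have d2: "((\<lambda>z. of_real pi / sin (of_real pi * z)) has_field_derivative
              - (of_real pi / sin (of_real pi * x)) * (of_real pi * cot (of_real pi * x))) (at x)"
    using s by (auto intro!: derivative_eq_intros simp: cot_def field_simps power2_eq_square)
  have "Gamma x * Gamma (1 - x) * (Digamma x - Digamma (1 - x)) =
        - (of_real pi / sin (of_real pi * x)) * (of_real pi * cot (of_real pi * x))"
    using DERIV_unique[OF d1 d2[folded G]] .
  also have "Gamma x * Gamma (1 - x) = of_real pi / sin (of_real pi * x)"
    by (rule Gamma_reflection_complex)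
  finally have "of_real pi / sin (of_real pi * x) * (Digamma x - Digamma (1 - x) + of_real pi * cot (of_real pi * x)) = 0"
    by (simp add: algebra_simps)
  moreover have "of_real pi / sin (of_real pi * x) \<noteq> 0" using s by simp
  ultimately have "Digamma x - Digamma (1 - x) + of_real pi * cot (of_real pi * x) = 0"
    by simp
  thus ?thesis by (simp add: algebra_simps)
qed


lemma final_alg:
  fixes x B0 P Q A Bs H pc g p :: complex
  assumes x0: "x \<noteq> 0" and xb: "x - B0 \<noteq> 0" and b0: "B0 \<noteq> 0" and p0: "p \<noteq> 0"
    and AB: "A + Bs = 1/x - 1/(x - B0)" and pc: "pc = P - Q"
  shows "x^2 / (2 * B0 * (x - B0)) - x / 2 * pc - p * x * (((P + A) + (Q + 1/x - Bs) + 2*g - (H + 1/B0) - H) / (2*p))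
         = x * ((H + 1/B0) - (P + A) - g)"
proof -
  define v where "v = 1/(x - B0)"
  define w where "w = 1/B0"
  define y where "y = 1/x"
  have xy: "x * y = 1" using x0 by (simp add: y_def)
  have e1: "x^2 / (2 * B0 * (x - B0)) = x * w / 2 + x * v / 2"
    using x0 xb b0 by (simp add: v_def w_def field_simps power2_eq_square)
  have e2: "p * x * (((P + A) + (Q + 1/x - Bs) + 2*g - (H + 1/B0) - H) / (2*p))
          = x * ((P + A) + (Q + y - Bs) + 2*g - (H + w) - H) / 2"
    using p0 by (simp add: y_def w_def field_simps)
  have Bs: "Bs = y - v - A" using AB by (simp add: v_def y_def algebra_simps)
  have "x * w / 2 + x * v / 2 - x / 2 * (P - Q) - x * ((P + A) + (Q + y - (y - v - A)) + 2*g - (H + w) - H) / 2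
        = x * ((H + w) - (P + A) - g)"
    by (simp add: field_simps)
  thus ?thesis unfolding e1 e2 unfolding Bs pc w_def[symmetric] .
qed








lemma zeta_tail:
  assumes k: "k \<ge> 2"
  shows "(\<lambda>j. 1 / (real (j + Suc b)) ^ k) sums (zeta_nat k - harm_gen k b)"
proof -
  have "summable (\<lambda>n. inverse (real n ^ k))" by (rule inverse_power_summable[OF k])
  hence "summable (\<lambda>n. inverse (real (n + 1) ^ k))" by (subst summable_iff_shift)
  hence sm: "summable (\<lambda>n. 1 / (real (Suc n)) ^ k)" by (simp add: divide_inverse)
  hence "(\<lambda>n. 1 / (real (Suc n)) ^ k) sums zeta_nat k" by (simp add: zeta_nat_def summable_sums)
  hence "(\<lambda>i. 1 / (real (Suc (i + b))) ^ k) sums (zeta_nat k - (\<Sum>i<b. 1 / (real (Suc i)) ^ k))"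
    using sums_iff_shift[of "\<lambda>n. 1 / (real (Suc n)) ^ k" b] by simp
  moreover have "(\<Sum>i<b. 1 / (real (Suc i)) ^ k) = harm_gen k b"
    unfolding harm_gen_def by (simp add: sum.atLeast1_atMost_eq)
  ultimately show ?thesis by simp
qed


lemma geom2_sums:
  fixes q :: "'a :: {real_normed_field, banach}"
  assumes "norm q < 1"
  shows "(\<lambda>k. q ^ (k + 2)) sums (q^2 / (1 - q))"
proof -
  have "(\<lambda>k. q^2 * q ^ k) sums (q^2 * (1 / (1 - q)))"
    by (rule sums_mult[OF geometric_sums[OF assms]])
  moreover have "(\<lambda>k. q ^ (k + 2)) = (\<lambda>k. q^2 * q ^ k)" by (rule ext) (simp only: power_add mult.commute)
  ultimately show ?thesis by simp
qed

lemma geom_val: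
  fixes x n :: "'a :: field"
  assumes "n \<noteq> 0" "n - x \<noteq> 0"
  shows "(x / n)^2 / (1 - x / n) = x^2 / (n * (n - x))"
proof -
  have "1 - x / n = (n - x) / n" using assms by (simp add: field_simps)
  thus ?thesis using assms by (simp add: power2_eq_square field_simps)
qed

lemma f_series_closed:
  fixes x :: complex
  assumes xn: "norm x < real b + 1"
  shows "summable (\<lambda>k. x ^ (k + 2) * complex_of_real (zeta_nat (k + 2) - harm_gen (k + 2) b))"
    and "f_series b x = x * (harm b - Digamma (of_nat (Suc b) - x) - euler_mascheroni)"
proof -
  define w where "w k j = (x / of_nat (j + Suc b)) ^ (k + 2)" for k j
  define N where "N j = real (j + Suc b)" for j
  have Npos: "N j > 0" for j by (simp add: N_def)
  have Nx: "norm x < N j" for j using xn by (simp add: N_def)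
  have nw: "norm (w k j) = (norm x / N j) ^ (k + 2)" for k j
    by (simp only: w_def N_def norm_divide norm_power norm_of_nat)
  have g1: "(\<lambda>k. w k j) sums (x^2 / (of_nat (j + Suc b) * (of_nat (j + Suc b) - x)))" for j
  proof -
    have q: "norm (x / of_nat (j + Suc b)) < 1" using Nx[of j] Npos[of j]
      by (simp only: N_def norm_divide norm_of_nat) simp
    have ne: "(of_nat (j + Suc b) :: complex) \<noteq> 0" by (simp only: of_nat_eq_0_iff)
    have ne2: "(of_nat (j + Suc b) :: complex) - x \<noteq> 0"
    proof
      assume "(of_nat (j + Suc b) :: complex) - x = 0"
      hence "x = of_nat (j + Suc b)" by simp
      hence "norm x = N j" by (simp only: norm_of_nat N_def)
      thus False using Nx[of j] by simp
    qed
    have "(x / of_nat (j + Suc b))^2 / (1 - x / of_nat (j + Suc b)) = x^2 / (of_nat (j + Suc b) * (of_nat (j + Suc b) - x))"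
      by (rule geom_val[OF ne ne2])
    thus ?thesis using geom2_sums[OF q] by (simp add: w_def)
  qed
  have g1n: "(\<lambda>k. norm (w k j)) sums ((norm x)^2 / (N j * (N j - norm x)))" for j
  proof -
    have q: "norm (norm x / N j) < 1" using Nx[of j] Npos[of j] by simp
    have "(norm x / N j)^2 / (1 - norm x / N j) = (norm x)^2 / (N j * (N j - norm x))"
      using Npos[of j] Nx[of j] by (simp add: field_simps power2_eq_square)
    thus ?thesis using geom2_sums[OF q] unfolding nw by simp
  qed
  define \<epsilon> where "\<epsilon> = real b + 1 - norm x"
  have \<epsilon>: "\<epsilon> > 0" using xn by (simp add: \<epsilon>_def)
  define m where "m = min 1 \<epsilon>"
  have m: "m > 0" "m \<le> 1" "m \<le> \<epsilon>" using \<epsilon> by (auto simp: m_def)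
  have outer_bound: "(norm x)^2 / (N j * (N j - norm x)) \<le> ((norm x)^2 / m) * inverse (real (Suc j)) ^ 2" for j
  proof -
    have N1: "N j \<ge> real (Suc j)" by (simp add: N_def)
    have N2: "N j - norm x \<ge> m * real (Suc j)"
    proof -
      have "N j - norm x = real j + \<epsilon>" by (simp add: N_def \<epsilon>_def)
      moreover have "m * real (Suc j) = m * real j + m" by (simp add: algebra_simps)
      moreover have "m * real j \<le> real j" using m by (simp add: mult_left_le_one_le)
      ultimately show ?thesis using m by linarith
    qed
    have "real (Suc j) * (m * real (Suc j)) \<le> N j * (N j - norm x)"
      by (rule mult_mono[OF N1 N2]) (use m Npos[of j] in auto)
    moreover have "0 < real (Suc j) * (m * real (Suc j))" using m by simp
    ultimately have "(norm x)^2 / (N j * (N j - norm x)) \<le> (norm x)^2 / (real (Suc j) * (m * real (Suc j)))"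
      by (intro divide_left_mono) auto
    also have "\<dots> = ((norm x)^2 / m) * inverse (real (Suc j)) ^ 2"
      using m by (simp add: field_simps power2_eq_square)
    finally show ?thesis .
  qed
  have outer_summ: "summable (\<lambda>j. (norm x)^2 / (N j * (N j - norm x)))"
  proof (rule summable_comparison_test'[OF summable_inv_sq[of "(norm x)^2 / m"]])
    fix j :: nat assume "j \<ge> 0"
    have "0 \<le> (norm x)^2 / (N j * (N j - norm x))" using Npos[of j] Nx[of j] by simp
    hence "norm ((norm x)^2 / (N j * (N j - norm x))) = (norm x)^2 / (N j * (N j - norm x))"
      by (simp only: real_norm_def abs_of_nonneg)
    thus "norm ((norm x)^2 / (N j * (N j - norm x))) \<le> (norm x)^2 / m * inverse (real (Suc j)) ^ 2"
      using outer_bound[of j] by linarith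
  qed
  have abs2: "(\<lambda>z. norm (case z of (j,k) \<Rightarrow> w k j)) summable_on UNIV \<times> UNIV"
  proof (rule Infinite_Sum.abs_summable_on_Sigma_iff[where f="\<lambda>z. case z of (j,k) \<Rightarrow> w k j" and A=UNIV and B="\<lambda>_. UNIV", THEN iffD2], intro conjI ballI)
    fix j :: nat
    show "(\<lambda>k. norm (case (j, k) of (j, k) \<Rightarrow> w k j)) summable_on UNIV"
      using sums_summable[OF g1n[of j]]
      by (subst summable_on_UNIV_nonneg_real_iff) auto
  next
    have inf: "infsum (\<lambda>k. norm (case (j, k) of (j, k) \<Rightarrow> w k j)) UNIV = (norm x)^2 / (N j * (N j - norm x))" for j
      by (simp, rule infsumI, rule sums_nonneg_imp_has_sum[OF g1n]) simp
    show "(\<lambda>j. norm (infsum (\<lambda>k. norm (case (j, k) of (j, k) \<Rightarrow> w k j)) UNIV)) summable_on UNIV"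
    proof -
      have eq: "(\<lambda>j. norm ((norm x)^2 / (N j * (N j - norm x)))) = (\<lambda>j. (norm x)^2 / (N j * (N j - norm x)))"
      proof (rule ext)
        fix j
        have "0 \<le> (norm x)^2 / (N j * (N j - norm x))" using Npos[of j] Nx[of j] by simp
        thus "norm ((norm x)^2 / (N j * (N j - norm x))) = (norm x)^2 / (N j * (N j - norm x))"
          by (simp only: real_norm_def abs_of_nonneg)
      qed
      have nn: "0 \<le> (norm x)^2 / (N j * (N j - norm x))" for j using Npos[of j] Nx[of j] by simp
      show ?thesis unfolding inf eq using outer_summ nn
        by (subst summable_on_UNIV_nonneg_real_iff) auto
    qed
  qed
  have sum2: "(\<lambda>(j,k). w k j) summable_on UNIV \<times> UNIV"
    by (rule abs_summable_summable[OF abs2])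
  have sum2': "(\<lambda>(k,j). w k j) summable_on UNIV \<times> UNIV"
    using sum2 by (subst summable_on_swap) (simp add: case_prod_unfold)
  define T where "T k = x ^ (k + 2) * complex_of_real (zeta_nat (k + 2) - harm_gen (k + 2) b)" for k
  have hk: "((\<lambda>j. w k j) has_sum T k) UNIV" for k
  proof -
    have zt: "(\<lambda>j. 1 / (real (j + Suc b)) ^ (k + 2)) sums (zeta_nat (k + 2) - harm_gen (k + 2) b)"
      by (rule zeta_tail) simp
    have ew: "w k j = x ^ (k + 2) * complex_of_real (1 / (real (j + Suc b)) ^ (k + 2))" for j
      by (simp add: w_def power_divide)
    have s1: "(\<lambda>j. w k j) sums T k"
      unfolding ew T_def by (intro sums_mult sums_of_real zt)
    have "summable (\<lambda>j. norm x ^ (k + 2) * (1 / (real (j + Suc b)) ^ (k + 2)))"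
      by (intro summable_mult sums_summable[OF zt])
    moreover have eqn: "norm (w k j) = norm x ^ (k + 2) * (1 / (real (j + Suc b)) ^ (k + 2))" for j
      unfolding nw N_def by (simp add: power_divide)
    ultimately have s2: "summable (\<lambda>j. norm (w k j))" by simp
    show ?thesis by (rule norm_summable_imp_has_sum[OF s2 s1])
  qed
  define C where "C = x * (harm b - Digamma (of_nat (Suc b) - x) - euler_mascheroni)"
  have hj: "((\<lambda>j. x^2 / (of_nat (j + Suc b) * (of_nat (j + Suc b) - x))) has_sum C) UNIV"
  proof -
    have z1: "(of_nat (Suc b) :: complex) \<noteq> 0" by (simp only: of_nat_eq_0_iff)
    have z2: "(of_nat (Suc b) :: complex) - x \<noteq> 0"
    proof
      assume "(of_nat (Suc b) :: complex) - x = 0"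
      hence "x = of_nat (Suc b)" by simp
      hence "norm x = real (Suc b)" by (simp only: norm_of_nat)
      thus False using xn by simp
    qed
    have "(\<lambda>j. x * ((inverse (of_nat (Suc j)) - inverse (of_nat (Suc b) + of_nat j))
                   - (inverse (of_nat (Suc j)) - inverse ((of_nat (Suc b) - x) + of_nat j)))) sums
          (x * ((Digamma (of_nat (Suc b)) + euler_mascheroni) - (Digamma (of_nat (Suc b) - x) + euler_mascheroni)))"
      by (intro sums_mult sums_diff dig_sums z1 z2)
    note S = this
    have H: "Digamma (of_nat (Suc b)) + euler_mascheroni = (harm b :: complex)"
      by (simp only: Digamma_of_nat) simp
    have E: "x * ((inverse (of_nat (Suc j)) - inverse (of_nat (Suc b) + of_nat j))
                   - (inverse (of_nat (Suc j)) - inverse ((of_nat (Suc b) - x) + of_nat j)))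
            = x^2 / (of_nat (j + Suc b) * (of_nat (j + Suc b) - x))" for j
    proof -
      have ne: "(of_nat (j + Suc b) :: complex) \<noteq> 0" by (simp only: of_nat_eq_0_iff)
      have ne2: "(of_nat (j + Suc b) :: complex) - x \<noteq> 0"
      proof
        assume "(of_nat (j + Suc b) :: complex) - x = 0"
        hence "x = of_nat (j + Suc b)" by simp
        hence "norm x = N j" by (simp only: norm_of_nat N_def)
        thus False using Nx[of j] by simp
      qed
      have e1: "(of_nat (Suc b) + of_nat j :: complex) = of_nat (j + Suc b)" by simp
      have e2: "((of_nat (Suc b) - x) + of_nat j :: complex) = of_nat (j + Suc b) - x" by simp
      show ?thesis unfolding e1 e2 using ne ne2 by (simp add: field_simps power2_eq_square)
    qed
    have val: "x * (harm b - (Digamma (of_nat (Suc b) - x) + euler_mascheroni)) = C"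
      by (simp add: C_def algebra_simps)
    have s1: "(\<lambda>j. x^2 / (of_nat (j + Suc b) * (of_nat (j + Suc b) - x))) sums C"
      using S unfolding E H val .
    have s2: "summable (\<lambda>j. norm (x^2 / (of_nat (j + Suc b) * (of_nat (j + Suc b) - x))))"
    proof (rule summable_comparison_test'[OF outer_summ])
      fix j :: nat assume "j \<ge> 0"
      have "norm (of_nat (j + Suc b) - x) \<ge> N j - norm x"
        using norm_triangle_ineq2[of "of_nat (j + Suc b)" x] unfolding N_def by (simp only: norm_of_nat)
      hence "N j * (N j - norm x) \<le> N j * norm (of_nat (j + Suc b) - x)"
        using Npos[of j] by (intro mult_left_mono) auto
      moreover have "0 < N j * (N j - norm x)" using Npos[of j] Nx[of j] by simp
      ultimately have "(norm x)^2 / (N j * norm (of_nat (j + Suc b) - x)) \<le> (norm x)^2 / (N j * (N j - norm x))"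
        by (intro divide_left_mono) auto
      moreover have "norm (norm (x^2 / (of_nat (j + Suc b) * (of_nat (j + Suc b) - x)))) = (norm x)^2 / (N j * norm (of_nat (j + Suc b) - x))"
        unfolding N_def by (simp only: real_norm_def abs_norm_cancel norm_divide norm_mult norm_power norm_of_nat) (simp add: abs_of_nonneg)
      ultimately show "norm (norm (x^2 / (of_nat (j + Suc b) * (of_nat (j + Suc b) - x)))) \<le> (norm x)^2 / (N j * (N j - norm x))"
        by linarith
    qed
    show ?thesis by (rule norm_summable_imp_has_sum[OF s2 s1])
  qed
  have inner_k: "infsum (\<lambda>j. w k j) UNIV = T k" for k by (rule infsumI[OF hk])
  have inner_j: "infsum (\<lambda>k. w k j) UNIV = x^2 / (of_nat (j + Suc b) * (of_nat (j + Suc b) - x))" for j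
  proof (rule infsumI, rule norm_summable_imp_has_sum[OF _ g1])
    show "summable (\<lambda>k. norm (w k j))" using sums_summable[OF g1n[of j]] .
  qed
  have Tsumm: "T summable_on UNIV"
    using summable_on_Sigma_banach[of "\<lambda>k j. w k j" UNIV "\<lambda>_. UNIV"] sum2' by (simp add: inner_k)
  have swap: "infsum (\<lambda>k. infsum (\<lambda>j. w k j) UNIV) UNIV = infsum (\<lambda>j. infsum (\<lambda>k. w k j) UNIV) UNIV"
    by (rule infsum_swap_banach) (use sum2' in simp)
  hence "infsum T UNIV = C" unfolding inner_k inner_j using infsumI[OF hj] by simp
  moreover have "T sums infsum T UNIV" by (rule has_sum_imp_sums[OF has_sum_infsum[OF Tsumm]])
  ultimately have "T sums C" by simp
  thus "summable (\<lambda>k. x ^ (k + 2) * complex_of_real (zeta_nat (k + 2) - harm_gen (k + 2) b))"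
    by (auto simp: T_def[abs_def] sums_iff)
  show "f_series b x = x * (harm b - Digamma (of_nat (Suc b) - x) - euler_mascheroni)"
    using \<open>T sums C\<close> by (simp add: f_series_def T_def[abs_def] C_def sums_iff)
qed




lemma Digamma_shift:
  fixes z :: complex
  assumes "\<And>k. k < n \<Longrightarrow> z + of_nat k \<noteq> 0"
  shows "Digamma (z + of_nat n) = Digamma z + (\<Sum>k<n. 1 / (z + of_nat k))"
  using assms
proof (induction n)
  case 0 thus ?case by simp
next
  case (Suc n)
  have "Digamma (z + of_nat (Suc n)) = Digamma ((z + of_nat n) + 1)" by (simp add: add_ac)
  also have "\<dots> = Digamma (z + of_nat n) + 1 / (z + of_nat n)"
    by (rule Digamma_plus1) (use Suc.prems in auto)
  also have "Digamma (z + of_nat n) = Digamma z + (\<Sum>k<n. 1 / (z + of_nat k))"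
    by (rule Suc.IH) (use Suc.prems in auto)
  finally show ?case by simp
qed

lemma sum_AB:
  fixes x :: complex
  shows "(\<Sum>k<b. 1 / ((1 - x) + of_nat k)) + (\<Sum>k<b. 1 / ((1 + (x - of_nat b)) + of_nat k))
         = 1 / x - 1 / (x - of_nat b)"
proof -
  have B: "(\<Sum>k<b. 1 / ((1 + (x - of_nat b)) + of_nat k)) = (\<Sum>k<b. 1 / (x - of_nat k))"
  proof -
    have "(\<Sum>k<b. 1 / (x - of_nat k)) = (\<Sum>k<b. 1 / (x - of_nat (b - Suc k)))"
      by (rule sum.nat_diff_reindex[symmetric])
    also have "\<dots> = (\<Sum>k<b. 1 / ((1 + (x - of_nat b)) + of_nat k))"
      by (intro sum.cong refl) (auto simp: of_nat_diff algebra_simps)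
    finally show ?thesis ..
  qed
  have A: "(\<Sum>k<b. 1 / ((1 - x) + of_nat k)) = (\<Sum>k<b. - (1 / (x - of_nat (Suc k))))"
  proof (intro sum.cong refl)
    fix k
    have e: "(1 - x) + of_nat k = - (x - of_nat (Suc k))" by (simp add: algebra_simps)
    show "1 / ((1 - x) + of_nat k) = - (1 / (x - of_nat (Suc k)))"
      unfolding e by (rule divide_minus_right)
  qed
  show ?thesis unfolding A B
    using sum_lessThan_telescope'[of "\<lambda>k. 1 / (x - of_nat k)" b]
    by (simp add: sum.distrib[symmetric] algebra_simps)
qed

lemma final_alg2:
  fixes x B0 P Q A Bs H ct g p I :: complex
  assumes "x \<noteq> 0" "x - B0 \<noteq> 0" "B0 \<noteq> 0" "p \<noteq> 0"
    and "A + Bs = 1/x - 1/(x - B0)" and pc: "p * ct = P - Q"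
    and I: "I = ((P + A) + (Q + 1/x - Bs) + 2*g - (H + 1/B0) - H) / (2*p)"
  shows "x\<^sup>2 / (2 * B0 * (x - B0)) - p * x / 2 * ct - p * x * I = x * ((H + 1/B0) - (P + A) - g)"
proof -
  have "x\<^sup>2 / (2 * B0 * (x - B0)) - p * x / 2 * ct - p * x * I
      = x^2 / (2 * B0 * (x - B0)) - x / 2 * (p * ct) - p * x * (((P + A) + (Q + 1/x - Bs) + 2*g - (H + 1/B0) - H) / (2*p))"
    unfolding I by (simp add: algebra_simps)
  also have "\<dots> = x * ((H + 1/B0) - (P + A) - g)"
    by (rule final_alg) (use assms in auto)
  finally show ?thesis .
qed

lemma rhs_closed:
  assumes b: "b > 0" and x2: "2 * x \<notin> \<int>" and xb: "x \<noteq> of_nat b"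
  shows "rhs_formula b x = x * (harm b - Digamma (of_nat (Suc b) - x) - euler_mascheroni)"
proof -
  have xZ: "x \<notin> \<int>"
  proof
    assume "x \<in> \<int>" hence "2 * x \<in> \<int>" by (intro Ints_mult) auto
    thus False using x2 by simp
  qed
  have x0: "x \<noteq> 0" using xZ by auto
  have s: "sin (2 * of_real pi * x) \<noteq> 0"
    using sin_pi_nz[OF x2] by (simp add: mult_ac)
  have b1: "b \<ge> 1" using b by simp
  define a where "a = x - of_nat b"
  define P where "P = Digamma (1 - x)"
  define Q where "Q = Digamma x"
  define A where "A = (\<Sum>k<b. 1 / ((1 - x) + of_nat k))"
  define Bs where "Bs = (\<Sum>k<b. 1 / ((1 + a) + of_nat k))"
  define H where "H = (harm (b - 1) :: complex)"
  have harmb: "harm b = H + 1 / of_nat b"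
  proof -
    obtain m where m: "b = Suc m" using b by (cases b) auto
    show ?thesis by (simp add: H_def m harm_Suc divide_inverse)
  qed
  have D1: "Digamma (1 - a) = P + A"
  proof -
    have "Digamma ((1 - x) + of_nat b) = Digamma (1 - x) + A"
      unfolding A_def
    proof (rule Digamma_shift)
      fix k assume "k < b"
      show "1 - x + of_nat k \<noteq> 0"
      proof
        assume "1 - x + of_nat k = 0"
        hence "x = of_nat (Suc k)" by (simp add: algebra_simps)
        thus False using xZ by simp
      qed
    qed
    moreover have "(1 - x) + of_nat b = 1 - a" by (simp add: a_def)
    ultimately show ?thesis by (simp add: P_def)
  qed
  have D2: "Digamma (1 + a) = Q + 1 / x - Bs"
  proof -
    have "Digamma ((1 + a) + of_nat b) = Digamma (1 + a) + Bs"
      unfolding Bs_def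
    proof (rule Digamma_shift)
      fix k assume "k < b"
      show "1 + a + of_nat k \<noteq> 0"
      proof
        assume "1 + a + of_nat k = 0"
        hence "x = of_int (int b - int k - 1)" by (simp add: a_def algebra_simps)
        thus False using xZ by (metis Ints_of_int)
      qed
    qed
    moreover have "(1 + a) + of_nat b = x + 1" by (simp add: a_def)
    moreover have "Digamma (x + 1) = Q + 1 / x" using Digamma_plus1[OF x0] by (simp add: Q_def)
    ultimately show ?thesis by (simp add: algebra_simps)
  qed
  have AB: "A + Bs = 1 / x - 1 / (x - of_nat b)" unfolding A_def Bs_def a_def by (rule sum_AB)
  have pc: "of_real pi * cot (of_real pi * x) = P - Q"
    unfolding P_def Q_def by (rule Digamma_reflection[OF xZ, symmetric])
  have int_eq: "integral {0..1} (\<lambda>u::real.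
          (sin (2 * of_real pi * (x - of_nat b) * of_real u) / sin (2 * of_real pi * x)
           - of_real u * of_real (cos (2 * pi * real b * u))) * of_real (cot (pi * u)))
      = integral {0..1} (\<lambda>u. gz x b (of_real u) * of_real (cot (pi * u)))"
    by (intro integral_cong) (simp add: gz_def cos_of_real[symmetric])
  also have "\<dots> = (\<Sum>k. cc x b (Suc k))"
    by (rule integral_unique[OF main_integral[OF s xZ cc_summable_norm[OF xZ]]])
  also have "\<dots> = (Digamma (1 - a) + Digamma (1 + a) + 2 * euler_mascheroni - harm b - harm (b - 1)) / (2 * of_real pi)"
    unfolding a_def by (rule sums_unique[OF cc_sums[OF xZ b1], symmetric])
  also have "\<dots> = ((P + A) + (Q + 1/x - Bs) + 2 * euler_mascheroni - (H + 1 / of_nat b) - H) / (2 * of_real pi)"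
    unfolding D1 D2 harmb H_def ..
  finally have I: "integral {0..1} (\<lambda>u::real.
          (sin (2 * of_real pi * (x - of_nat b) * of_real u) / sin (2 * of_real pi * x)
           - of_real u * of_real (cos (2 * pi * real b * u))) * of_real (cot (pi * u))) =
       ((P + A) + (Q + 1/x - Bs) + 2 * euler_mascheroni - (H + 1 / of_nat b) - H) / (2 * of_real pi)" .
  have "rhs_formula b x = x * ((H + 1 / of_nat b) - (P + A) - euler_mascheroni)"
    unfolding rhs_formula_def
    by (rule final_alg2[OF x0 _ _ _ AB pc I]) (use xb b in auto)
  also have "P + A = Digamma (of_nat (Suc b) - x)"
    using D1 by (simp add: a_def algebra_simps)
  finally show ?thesis unfolding harmb .
qed


lemma closed_holo:
  fixes b :: nat
  shows "(\<lambda>x. x * (harm b - Digamma (of_nat (Suc b) - x) - euler_mascheroni)) holomorphic_on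
           {x::complex. x \<noteq> of_nat b \<and> 2 * x \<notin> \<int>}"
  unfolding holomorphic_on_def
proof
  fix x :: complex assume x: "x \<in> {x::complex. x \<noteq> of_nat b \<and> 2 * x \<notin> \<int>}"
  have xZ: "x \<notin> \<int>"
  proof
    assume "x \<in> \<int>" hence "2 * x \<in> \<int>" by (intro Ints_mult) auto
    thus False using x by simp
  qed
  have nz: "of_nat (Suc b) - x \<notin> \<int>\<^sub>\<le>\<^sub>0"
  proof
    assume "of_nat (Suc b) - x \<in> \<int>\<^sub>\<le>\<^sub>0"
    hence "of_nat (Suc b) - x \<in> \<int>" using nonpos_Ints_subset_Ints by blast
    hence "of_nat (Suc b) - (of_nat (Suc b) - x) \<in> \<int>" by (intro Ints_diff) auto
    thus False using xZ by simp
  qed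
  have d: "(Digamma has_field_derivative Polygamma 1 (of_nat (Suc b) - x)) (at (of_nat (Suc b) - x))"
    using has_field_derivative_Polygamma[OF nz, of 0 UNIV] by simp
  have d2: "((\<lambda>z::complex. of_nat (Suc b) - z) has_field_derivative -1) (at x)"
    by (auto intro!: derivative_eq_intros)
  have dd: "((\<lambda>z. Digamma (of_nat (Suc b) - z)) has_field_derivative Polygamma 1 (of_nat (Suc b) - x) * -1) (at x)"
    by (rule DERIV_chain2[OF d d2])
  have "\<exists>D. ((\<lambda>x. x * (harm b - Digamma (of_nat (Suc b) - x) - euler_mascheroni)) has_field_derivative D) (at x)"
    by (rule exI, (rule DERIV_mult DERIV_ident DERIV_diff DERIV_const dd)+)
  then obtain D where "((\<lambda>x. x * (harm b - Digamma (of_nat (Suc b) - x) - euler_mascheroni)) has_field_derivative D) (at x)" by blast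
  thus "(\<lambda>x. x * (harm b - Digamma (of_nat (Suc b) - x) - euler_mascheroni)) field_differentiable
          at x within {x::complex. x \<noteq> of_nat b \<and> 2 * x \<notin> \<int>}"
    unfolding field_differentiable_def by (blast intro: has_field_derivative_at_within)
qed

theorem mainTheorem9:
  fixes b :: nat
  assumes "b > 0"
  shows "(\<forall>x::complex. norm x < real b + 1 \<longrightarrow>
            summable (\<lambda>k. x ^ (k + 2) * complex_of_real (zeta_nat (k + 2) - harm_gen (k + 2) b)))
       \<and> (\<forall>x::complex. norm x < real b + 1 \<longrightarrow> x \<noteq> of_nat b \<longrightarrow> 2 * x \<notin> \<int> \<longrightarrow>
            f_series b x = rhs_formula b x)
       \<and> rhs_formula b holomorphic_on {x::complex. x \<noteq> of_nat b \<and> 2 * x \<notin> \<int>}"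
proof (intro conjI allI impI)
  fix x :: complex assume "norm x < real b + 1"
  thus "summable (\<lambda>k. x ^ (k + 2) * complex_of_real (zeta_nat (k + 2) - harm_gen (k + 2) b))"
    by (rule f_series_closed(1))
next
  fix x :: complex assume xn: "norm x < real b + 1" and xb: "x \<noteq> of_nat b" and x2: "2 * x \<notin> \<int>"
  show "f_series b x = rhs_formula b x"
    using f_series_closed(2)[OF xn] rhs_closed[OF assms x2 xb] by simp
next
  show "rhs_formula b holomorphic_on {x::complex. x \<noteq> of_nat b \<and> 2 * x \<notin> \<int>}"
    by (rule holomorphic_transform[OF closed_holo]) (use rhs_closed[OF assms] in auto)
qed

end
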